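(* The DRN $\mathcal X^0$ with transition cocycle $P^0(0,\omega)=I_k$, $P^0(n,\omega)=A_{n-1}\cdots A_0$ ($n\ge1$, $\omega=(A_z)_{z\in\mathbb Z}$) is synchronized, and its synchronization index $J:\Omega\to\mathbb K$ is given by $e_{J(\omega)}=\lim_{n\to\infty}A_{-1}\cdots A_{-n}e_1$ for $\mu$-a.e. $\omega=(A_z)_{z\in\mathbb Z}$. An $\mathcal F$-measurable function $N:\Omega\to\mathbb N$ is a forward (respectively pull-back) synchronization time of $\mathcal X^0$ if and only if $N\ge N_0^+$ (respectively $N\ge N_0^-$) $\mu$-a.e. on $\Omega$. In particular, $\mathcal X^0$ is not uniformly synchronized.
   Context: Fix $k\ge2$, $\mathbb K=\{1,\dots,k\}$, $S=\{s_1,\dots,s_k\}$, $e_1,\dots,e_k$ the canonical basis of $\mathbb R^k$. Let $\mathcal M$ be the set of $k\times k$ matrices with entries in $\{0,1\}$ having exactly one entry $1$ in each column (so $\#\mathcal M=k^k$), and $\nu$ the uniform probability on $\mathcal M$. Let $(\Omega,\mathcal F,\mu)=\bigotimes_{z\in\mathbb Z}(\mathcal M,2^{\mathcal M},\nu)$ and $\theta$ the left shift $\theta((A_z)_{z\in\mathbb Z})=(A_{z+1})_{z\in\mathbb Z}$; this is an invertible ergodic measure-preserving system. $\mathcal X^0$ is the deterministic random network (a Markov process on $S\times\Omega$ moving from fibre $\omega$ to $\theta\omega$) whose transition probabilities $\mathbb P\{X_n=(s_i,\theta^n\omega)\mid X_0=(s_j,\omega)\}$ are the entries $P^0(n,\omega)_{i,j}$.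 $\mathcal X^0$ is synchronized if there is a measurable $N:\Omega\to\mathbb N$ such that, $\mu$-a.e., all columns of $P^0(n,\omega)$ coincide for every $n\ge N(\omega)$; uniformly synchronized if such $N$ can be chosen $\mu$-a.e. constant. A synchronization index is a measurable $J:\Omega\to\mathbb K$ with $P^0(n,\omega)e_{J(\omega)}=e_{J(\theta^n\omega)}$ for all $n\in\mathbb N_0$, $\mu$-a.e. $\omega$. A forward synchronization time is a measurable $N^+:\Omega\to\mathbb N$ with $P^0(n,\omega)e_j=e_{J(\theta^n\omega)}$ for all $j$ and all $n\ge N^+(\omega)$, $\mu$-a.e.; a pull-back synchronization time is a measurable $N^-:\Omega\to\mathbb N$ with $P^0(n,\theta^{-n}\omega)e_j=e_{J(\omega)}$ for all $j$ and $n\ge N^-(\omega)$, $\mu$-a.e. Define $N_0^+(\omega)=\min\{n\in\mathbb N:\operatorname{rank}P^0(n,\omega)=1\}$ if $\lim_{n}\operatorname{rank}P^0(n,\omega)=1$ and $N_0^+(\omega)=1$ otherwise; and $N_0^-(\omega)=\min\{n\in\mathbb N:\operatorname{rank}P^0(n,\theta^{-n}\omega)=1\}$ if $\lim_n\operatorname{rank}P^0(n,\theta^{-n}\omega)=1$ and $N_0^-(\omega)=1$ otherwise. *)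

theory Defs
  imports "HOL-Probability.Probability"
begin

text \<open>Index set K is the finite type 'k (with k = CARD('k) and its order);
  e_j is axis j 1.  The index "1" of K is the least element of 'k.\<close>

definition e1_idx :: "'k::{finite,wellorder}" where
  "e1_idx = (LEAST i. True)"

definition Mset :: "(real^'k^'k) set" where
  "Mset = {A. (\<forall>i j. A$i$j = 0 \<or> A$i$j = 1) \<and> (\<forall>j. \<exists>!i. A$i$j = 1)}"

definition Mu :: "(int \<Rightarrow> real^'k::finite^'k) measure" where
  "Mu = (\<Pi>\<^sub>M z\<in>(UNIV::int set). uniform_count_measure Mset)"

definition theta :: "(int \<Rightarrow> 'a) \<Rightarrow> (int \<Rightarrow> 'a)" where
  "theta \<omega> = (\<lambda>z. \<omega> (z + 1))"

definition theta_inv :: "(int \<Rightarrow> 'a) \<Rightarrow> (int \<Rightarrow> 'a)" where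
  "theta_inv \<omega> = (\<lambda>z. \<omega> (z - 1))"

fun P0 :: "nat \<Rightarrow> (int \<Rightarrow> real^'k::finite^'k) \<Rightarrow> real^'k^'k" where
  "P0 0 \<omega> = mat 1"
| "P0 (Suc n) \<omega> = \<omega> (int n) ** P0 n \<omega>"

definition cols_coincide :: "real^'k::finite^'k \<Rightarrow> bool" where
  "cols_coincide A \<longleftrightarrow> (\<forall>i j. column i A = column j A)"

definition synchronized :: "'k::finite itself \<Rightarrow> bool" where
  "synchronized (_::'k itself) \<longleftrightarrow> (\<exists>N :: (int \<Rightarrow> real^'k::finite^'k) \<Rightarrow> nat.
      N \<in> Mu \<rightarrow>\<^sub>M count_space UNIV \<and> (\<forall>\<omega>\<in>space Mu. 1 \<le> N \<omega>) \<and>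
      (AE \<omega> in Mu. \<forall>n\<ge>N \<omega>. cols_coincide (P0 n \<omega>)))"

definition unif_synchronized :: "'k::finite itself \<Rightarrow> bool" where
  "unif_synchronized (_::'k itself) \<longleftrightarrow> (\<exists>N :: (int \<Rightarrow> real^'k::finite^'k) \<Rightarrow> nat.
      N \<in> Mu \<rightarrow>\<^sub>M count_space UNIV \<and> (\<forall>\<omega>\<in>space Mu. 1 \<le> N \<omega>) \<and>
      (\<exists>c. AE \<omega> in Mu. N \<omega> = c) \<and>
      (AE \<omega> in Mu. \<forall>n\<ge>N \<omega>. cols_coincide (P0 n \<omega>)))"

definition sync_index :: "((int \<Rightarrow> real^'k::finite^'k) \<Rightarrow> 'k) \<Rightarrow> bool" where
  "sync_index J \<longleftrightarrow> J \<in> Mu \<rightarrow>\<^sub>M count_space UNIV \<and>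
      (AE \<omega> in Mu. \<forall>n. P0 n \<omega> *v axis (J \<omega>) 1 = axis (J ((theta ^^ n) \<omega>)) 1)"

definition fwd_sync_time ::
    "((int \<Rightarrow> real^'k::finite^'k) \<Rightarrow> 'k) \<Rightarrow> ((int \<Rightarrow> real^'k^'k) \<Rightarrow> nat) \<Rightarrow> bool" where
  "fwd_sync_time J N \<longleftrightarrow> N \<in> Mu \<rightarrow>\<^sub>M count_space UNIV \<and> (\<forall>\<omega>\<in>space Mu. 1 \<le> N \<omega>) \<and>
      (AE \<omega> in Mu. \<forall>j. \<forall>n\<ge>N \<omega>. P0 n \<omega> *v axis j 1 = axis (J ((theta ^^ n) \<omega>)) 1)"

definition pb_sync_time ::
    "((int \<Rightarrow> real^'k::finite^'k) \<Rightarrow> 'k) \<Rightarrow> ((int \<Rightarrow> real^'k^'k) \<Rightarrow> nat) \<Rightarrow> bool" where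
  "pb_sync_time J N \<longleftrightarrow> N \<in> Mu \<rightarrow>\<^sub>M count_space UNIV \<and> (\<forall>\<omega>\<in>space Mu. 1 \<le> N \<omega>) \<and>
      (AE \<omega> in Mu. \<forall>j. \<forall>n\<ge>N \<omega>. P0 n ((theta_inv ^^ n) \<omega>) *v axis j 1 = axis (J \<omega>) 1)"

definition N0_plus :: "(int \<Rightarrow> real^'k::finite^'k) \<Rightarrow> nat" where
  "N0_plus \<omega> = (if (\<lambda>n. rank (P0 n \<omega>)) \<longlonglongrightarrow> 1
      then (LEAST n. 1 \<le> n \<and> rank (P0 n \<omega>) = 1) else 1)"

definition N0_minus :: "(int \<Rightarrow> real^'k::finite^'k) \<Rightarrow> nat" where
  "N0_minus \<omega> = (if (\<lambda>n. rank (P0 n ((theta_inv ^^ n) \<omega>))) \<longlonglongrightarrow> 1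
      then (LEAST n. 1 \<le> n \<and> rank (P0 n ((theta_inv ^^ n) \<omega>)) = 1) else 1)"

end

theory Submission
  imports Defs
begin


definition fm :: "real^'k::finite^'k \<Rightarrow> 'k \<Rightarrow> 'k" where
  "fm A j = (THE i. A$i$j = 1)"

definition mk :: "('k::finite \<Rightarrow> 'k) \<Rightarrow> real^'k^'k" where
  "mk g = (\<chi> i j. if i = g j then 1 else 0)"

lemma mk_in: "mk g \<in> Mset"
  unfolding Mset_def mk_def by auto

lemma fm_mk[simp]: "fm (mk g) = g"
  unfolding fm_def mk_def by (auto intro!: ext the_equality)

lemma Mset_entry: assumes "A \<in> Mset" shows "A$i$j = (if i = fm A j then 1 else 0)"
proof -
  from assms have u: "\<exists>!i. A$i$j = 1" and z: "\<And>i. A$i$j = 0 \<or> A$i$j = 1" unfolding Mset_def by auto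
  have f: "A$(fm A j)$j = 1" unfolding fm_def using theI'[OF u] .
  show ?thesis using u f z[of i] by (metis zero_neq_one)
qed

lemma Mset_mk: "A \<in> Mset \<Longrightarrow> A = mk (fm A)"
  by (simp add: vec_eq_iff mk_def Mset_entry)

lemma Mset_eq: "Mset = range (mk :: ('k::finite \<Rightarrow> 'k) \<Rightarrow> _)"
  using Mset_mk mk_in by blast

lemma finite_Mset: "finite (Mset :: (real^'k::finite^'k) set)"
  unfolding Mset_eq by simp

lemma Mset_ne: "Mset \<noteq> {}" using mk_in by blast

lemma mat1_mk: "(mat 1 :: real^'k::finite^'k) = mk id"
  by (simp add: mat_def mk_def vec_eq_iff)

lemma Mset_axis: "A \<in> Mset \<Longrightarrow> A *v axis j 1 = axis (fm A j) 1"
  unfolding matrix_vector_mult_basis by (simp add: column_def vec_eq_iff axis_def Mset_entry)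

fun Gc :: "(int \<Rightarrow> real^'k::finite^'k) \<Rightarrow> int \<Rightarrow> nat \<Rightarrow> 'k \<Rightarrow> 'k" where
  "Gc \<omega> a 0 = id"
| "Gc \<omega> a (Suc n) = fm (\<omega> (a + int n)) \<circ> Gc \<omega> a n"

lemma Gc_add: "Gc \<omega> a (m + n) = Gc \<omega> (a + int m) n \<circ> Gc \<omega> a m"
  by (induction n) (auto simp: ac_simps)

lemma Gc_shift: "Gc (\<lambda>z. \<omega> (z + s)) a n = Gc \<omega> (a + s) n"
  by (induction n) (auto simp: ac_simps)

lemma P0_Gc: "(\<And>z. \<omega> z \<in> Mset) \<Longrightarrow> P0 n \<omega> *v axis j 1 = axis (Gc \<omega> 0 n j) 1"
  by (induction n arbitrary: j) (auto simp: matrix_vector_mul_assoc[symmetric] Mset_axis)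

lemma P0_Gc_shift: "(\<And>z. \<omega> z \<in> Mset) \<Longrightarrow> P0 n (\<lambda>z. \<omega> (z + s)) *v axis j 1 = axis (Gc \<omega> s n j) 1"
  using P0_Gc[of "\<lambda>z. \<omega> (z + s)" n j] by (simp add: Gc_shift)

lemma axis1_eq[simp]: "axis i (1::real) = axis j 1 \<longleftrightarrow> i = j"
  by (simp add: axis_eq_axis)

lemma cols_iff: "(\<And>j. P *v axis j 1 = axis (f j) 1) \<Longrightarrow> cols_coincide P \<longleftrightarrow> (\<forall>i j. f i = f j)"
  unfolding cols_coincide_def by (simp add: matrix_vector_mult_basis[symmetric])

lemma rank_iff: fixes P :: "real^'k::finite^'k"
  assumes "\<And>j. P *v axis j 1 = axis (f j) 1"
  shows "rank P = 1 \<longleftrightarrow> (\<forall>i j. f i = f j)"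
proof -
  have cols: "columns P = (\<lambda>j. axis (f j) 1) ` UNIV"
    by (auto simp: columns_def matrix_vector_mult_basis[symmetric] assms)
  show ?thesis
  proof
    assume r: "rank P = 1"
    show "\<forall>i j. f i = f j"
    proof (rule ccontr)
      assume "\<not> (\<forall>i j. f i = f j)"
      then obtain a b where ab: "f a \<noteq> f b" by blast
      have "independent {axis (f a) (1::real), axis (f b) 1}"
        by (rule independent_mono[OF independent_Basis]) auto
      moreover have "{axis (f a) (1::real), axis (f b) 1} \<subseteq> columns P" using cols by auto
      ultimately have "card {axis (f a) (1::real), axis (f b) 1} \<le> dim (columns P)"
        by (simp add: independent_card_le_dim)
      with ab r show False by (simp add: column_rank_def)
    qed
  next
    assume "\<forall>i j. f i = f j"
    then have "columns P = {axis (f undefined) 1}" using cols by auto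
    then show "rank P = 1" by (simp add: column_rank_def axis_eq_0_iff)
  qed
qed

definition Cst :: "(real^'k::finite^'k) set" where
  "Cst = {A \<in> Mset. \<forall>i j. fm A i = fm A j}"

lemma Gc_const: assumes "\<omega> (a + int m) \<in> Cst" "m < n"
  shows "Gc \<omega> a n i = Gc \<omega> a n j"
proof -
  from less_imp_Suc_add[OF assms(2)] obtain d where n: "n = Suc m + d" by auto
  have e: "fm (\<omega> (a + int m)) (Gc \<omega> a m i) = fm (\<omega> (a + int m)) (Gc \<omega> a m j)"
    using assms(1) unfolding Cst_def by blast
  show ?thesis unfolding n Gc_add by (simp add: e)
qed

lemma Gc_const_mono: assumes "\<forall>i j. Gc \<omega> a m i = Gc \<omega> a m j" "m \<le> n"
  shows "Gc \<omega> a n i = Gc \<omega> a n j"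
proof -
  obtain d where n: "n = m + d" using assms(2) le_Suc_ex by blast
  show ?thesis using assms(1)[rule_format, of i j] unfolding n Gc_add by simp
qed

lemma Gc_const_mono_back: assumes "\<forall>i j. Gc \<omega> (- int m) m i = Gc \<omega> (- int m) m j" "m \<le> n"
  shows "Gc \<omega> (- int n) n = (\<lambda>_. Gc \<omega> (- int m) m i)"
proof -
  obtain d where n: "n = d + m" using assms(2) by (metis add.commute le_Suc_ex)
  have "Gc \<omega> (- int n) n = Gc \<omega> (- int m) m \<circ> Gc \<omega> (- int n) d"
    unfolding n Gc_add by (simp add: n)
  then show ?thesis using assms(1) by auto
qed



abbreviation MM where "MM \<equiv> uniform_count_measure (Mset :: (real^'k::finite^'k) set)"

lemma prob_MM: "prob_space MM"
  by (simp add: prob_space_uniform_count_measure finite_Mset Mset_ne)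

lemma prob_Mu: "prob_space (Mu :: (int \<Rightarrow> real^'k::finite^'k) measure)"
  unfolding Mu_def by (rule prob_space_PiM) (simp add: prob_MM)

lemma space_Mu: "space Mu = {\<omega>. \<forall>z. \<omega> z \<in> Mset}"
  unfolding Mu_def by (auto simp: space_PiM PiE_UNIV_domain space_uniform_count_measure)

lemma cyl_eq: "{\<omega>\<in>space Mu. \<forall>z\<in>S. \<omega> z \<in> A z} = prod_emb UNIV (\<lambda>_. MM) S (Pi\<^sub>E S A)"
  unfolding Mu_def prod_emb_def by (auto simp: restrict_PiE_iff space_PiM)

lemma cyl_sets: "finite S \<Longrightarrow> (\<And>z. z\<in>S \<Longrightarrow> A z \<subseteq> Mset) \<Longrightarrow> {\<omega>\<in>space Mu. \<forall>z\<in>S. \<omega> z \<in> A z} \<in> sets Mu"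
  unfolding cyl_eq unfolding Mu_def by (rule sets_PiM_I) (auto simp: sets_uniform_count_measure)

lemma cyl_meas: "finite S \<Longrightarrow> (\<And>z. z\<in>S \<Longrightarrow> A z \<subseteq> (Mset :: (real^'k::finite^'k) set)) \<Longrightarrow>
   emeasure Mu {\<omega>\<in>space Mu. \<forall>z\<in>S. \<omega> z \<in> A z} = ennreal (\<Prod>z\<in>S. real (card (A z)) / real (card (Mset :: (real^'k::finite^'k) set)))"
  unfolding cyl_eq unfolding Mu_def
  apply (subst emeasure_PiM_emb)
      apply (auto simp: prob_MM sets_uniform_count_measure)
  apply (subst prod_ennreal[symmetric])
   apply simp
  apply (rule prod.cong, simp)
  apply (subst finite_measure.emeasure_eq_measure[OF prob_space.finite_measure[OF prob_MM]])
  apply (simp add: measure_uniform_count_measure finite_Mset)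
  done

lemma sh_meas: "(\<lambda>\<omega> z. \<omega> (z + s)) \<in> measurable Mu Mu"
  unfolding Mu_def
  apply (rule measurable_PiM_single')
   apply (rule measurable_component_singleton, simp)
  apply (auto simp: space_PiM)
  done

lemma distr_sh_cyl:
  fixes A :: "int \<Rightarrow> (real^'k::finite^'k) set"
  assumes J: "finite J" and As: "\<And>i. i \<in> J \<Longrightarrow> A i \<subseteq> Mset"
  shows "emeasure (distr (Mu::(int \<Rightarrow> real^'k^'k) measure) Mu (\<lambda>\<omega> z. \<omega> (z + s))) (prod_emb UNIV (\<lambda>_. MM) J (Pi\<^sub>E J A))
    = emeasure (Mu::(int \<Rightarrow> real^'k^'k) measure) (prod_emb UNIV (\<lambda>_. MM) J (Pi\<^sub>E J A))"
proof -
  have pre: "(\<lambda>\<omega> z. \<omega> (z + s)) -` prod_emb UNIV (\<lambda>_. MM) J (Pi\<^sub>E J A) \<inter> space (Mu::(int \<Rightarrow> real^'k^'k) measure) =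
      {\<omega>\<in>space Mu. \<forall>z\<in>(\<lambda>j. j + s) ` J. \<omega> z \<in> A (z - s)}"
    unfolding cyl_eq[symmetric] by (auto simp: space_Mu)
  have Ps: "prod_emb UNIV (\<lambda>_. MM) J (Pi\<^sub>E J A) \<in> sets (Mu::(int \<Rightarrow> real^'k^'k) measure)"
    using cyl_sets[of J A] J As by (simp add: cyl_eq)
  have "emeasure (distr (Mu::(int \<Rightarrow> real^'k^'k) measure) Mu (\<lambda>\<omega> z. \<omega> (z + s))) (prod_emb UNIV (\<lambda>_. MM) J (Pi\<^sub>E J A))
      = emeasure (Mu::(int \<Rightarrow> real^'k^'k) measure) {\<omega>\<in>space Mu. \<forall>z\<in>(\<lambda>j. j + s) ` J. \<omega> z \<in> A (z - s)}"
    using emeasure_distr[OF sh_meas Ps] pre by simp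
  also have "\<dots> = ennreal (\<Prod>z\<in>(\<lambda>j. j + s) ` J. real (card (A (z - s))) / real (card (Mset :: (real^'k::finite^'k) set)))"
    using cyl_meas[of "(\<lambda>j. j + s) ` J" "\<lambda>z. A (z - s)"] J As by force
  also have "\<dots> = ennreal (\<Prod>z\<in>J. real (card (A z)) / real (card (Mset :: (real^'k::finite^'k) set)))"
    by (subst prod.reindex) (simp_all add: inj_on_def o_def)
  also have "\<dots> = emeasure (Mu::(int \<Rightarrow> real^'k^'k) measure) {\<omega>\<in>space Mu. \<forall>z\<in>J. \<omega> z \<in> A z}"
    by (rule cyl_meas[symmetric]) (use J As in auto)
  finally show ?thesis by (simp add: cyl_eq)
qed

lemma distr_sh: "distr (Mu::(int \<Rightarrow> real^'k::finite^'k) measure) Mu (\<lambda>\<omega> z. \<omega> (z + s)) = Mu"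
  unfolding Mu_def[symmetric]
  apply (rule measure_eqI_PiM_infinite[where I=UNIV and M="\<lambda>_. MM"])
     apply (simp add: Mu_def)
    apply (simp add: Mu_def)
   apply (rule distr_sh_cyl, simp, auto simp: sets_uniform_count_measure)[1]
  apply (rule prob_space.finite_measure[OF prob_space.prob_space_distr[OF prob_Mu sh_meas]])
  done

lemma AE_sh: assumes "AE \<omega> in Mu. P \<omega>" shows "AE \<omega> in Mu. P (\<lambda>z. \<omega> (z + s))"
proof -
  have e: "distr Mu Mu (\<lambda>\<omega> z. \<omega> (z + s)) = Mu" by (rule distr_sh)
  show ?thesis by (rule AE_distrD[OF sh_meas]) (unfold e, rule assms)
qed

lemma theta_pow: "(theta ^^ n) \<omega> = (\<lambda>z. \<omega> (z + int n))"
  by (induction n arbitrary: \<omega>) (auto simp: theta_def ac_simps)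

lemma theta_inv_pow: "(theta_inv ^^ n) \<omega> = (\<lambda>z. \<omega> (z - int n))"
  by (induction n arbitrary: \<omega>) (auto simp: theta_inv_def algebra_simps)

lemma Cst_ne: "mk (\<lambda>_. e) \<in> Cst"
  by (simp add: Cst_def mk_in)

lemma Cst_sub: "Cst \<subseteq> Mset" by (auto simp: Cst_def)

lemma noconst_null:
  fixes ix :: "nat \<Rightarrow> int"
  assumes inj: "inj ix"
  shows "{\<omega>\<in>space (Mu :: (int \<Rightarrow> real^'k::finite^'k) measure). \<forall>m. \<omega> (ix m) \<in> Mset - Cst} \<in> null_sets Mu"
proof -
  define q :: real where "q = real (card (Mset - Cst :: (real^'k^'k) set)) / real (card (Mset :: (real^'k^'k) set))"
  define B where "B n = {\<omega>\<in>space (Mu :: (int \<Rightarrow> real^'k::finite^'k) measure). \<forall>z\<in>ix ` {..<n}. \<omega> z \<in> Mset - Cst}" for n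
  let ?Z = "{\<omega>\<in>space (Mu :: (int \<Rightarrow> real^'k::finite^'k) measure). \<forall>m. \<omega> (ix m) \<in> Mset - Cst}"
  have Zeq: "?Z = (\<Inter>n. B n)" unfolding B_def by (auto simp: space_Mu)
  have Bs: "B n \<in> sets Mu" for n unfolding B_def by (rule cyl_sets) auto
  have Zs: "?Z \<in> sets Mu" unfolding Zeq using Bs by auto
  have Bm: "emeasure Mu (B n) = ennreal (q ^ n)" for n
  proof -
    have "emeasure Mu (B n) = ennreal (\<Prod>z\<in>ix ` {..<n}. real (card (Mset - Cst :: (real^'k^'k) set)) / real (card (Mset :: (real^'k^'k) set)))"
      unfolding B_def by (rule cyl_meas) auto
    also have "\<dots> = ennreal (q ^ n)"
    proof -
      have "card (ix ` {..<n}) = n" using inj by (simp add: card_image inj_on_subset)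
      then show ?thesis by (simp add: prod_constant q_def)
    qed
    finally show ?thesis .
  qed
  have q0: "0 \<le> q" by (simp add: q_def)
  have "card (Mset - Cst :: (real^'k^'k) set) < card (Mset :: (real^'k^'k) set)"
    by (rule psubset_card_mono) (use finite_Mset Cst_ne[of undefined] Cst_sub in blast)+
  then have q1: "q < 1" using finite_Mset Mset_ne by (simp add: q_def)
  have lim: "(\<lambda>n. ennreal (q ^ n)) \<longlonglongrightarrow> ennreal 0"
    by (rule tendsto_ennrealI) (rule LIMSEQ_realpow_zero[OF q0 q1])
  have "emeasure Mu ?Z \<le> ennreal 0"
  proof (rule tendsto_le[OF trivial_limit_sequentially lim tendsto_const])
    show "\<forall>\<^sub>F n in sequentially. emeasure Mu ?Z \<le> ennreal (q ^ n)"
    proof (intro always_eventually allI)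
      fix n
      have "?Z \<subseteq> B n" using Zeq by auto
      from emeasure_mono[OF this Bs] show "emeasure Mu ?Z \<le> ennreal (q ^ n)" by (simp add: Bm)
    qed
  qed
  then show ?thesis using Zs by auto
qed

lemma good_AE: "AE \<omega> in (Mu :: (int \<Rightarrow> real^'k::finite^'k) measure).
   (\<exists>m::nat. \<omega> (int m) \<in> Cst) \<and> (\<exists>m::nat. \<omega> (-1 - int m) \<in> Cst)"
proof (rule AE_I')
  let ?Z1 = "{\<omega>\<in>space (Mu :: (int \<Rightarrow> real^'k::finite^'k) measure). \<forall>m. \<omega> (int m) \<in> Mset - Cst}"
  let ?Z2 = "{\<omega>\<in>space (Mu :: (int \<Rightarrow> real^'k::finite^'k) measure). \<forall>m. \<omega> ((\<lambda>m. -1 - int m) m) \<in> Mset - Cst}"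
  have "?Z1 \<in> null_sets Mu" by (rule noconst_null) (simp add: inj_def)
  moreover have "?Z2 \<in> null_sets Mu" by (rule noconst_null) (simp add: inj_def)
  ultimately show "?Z1 \<union> ?Z2 \<in> null_sets Mu" by auto
  show "{\<omega> \<in> space Mu. \<not> ((\<exists>m::nat. \<omega> (int m) \<in> Cst) \<and> (\<exists>m::nat. \<omega> (-1 - int m) \<in> Cst))} \<subseteq> ?Z1 \<union> ?Z2"
    by (auto simp: space_Mu)
qed



definition goodf :: "(int \<Rightarrow> real^'k::finite^'k) \<Rightarrow> bool" where
  "goodf \<omega> \<longleftrightarrow> (\<forall>z. \<omega> z \<in> Mset) \<and> (\<exists>m::nat. \<omega> (int m) \<in> Cst)"
definition goodb :: "(int \<Rightarrow> real^'k::finite^'k) \<Rightarrow> bool" where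
  "goodb \<omega> \<longleftrightarrow> (\<forall>z. \<omega> z \<in> Mset) \<and> (\<exists>m::nat. \<omega> (-1 - int m) \<in> Cst)"

definition Lf :: "(int \<Rightarrow> real^'k::finite^'k) \<Rightarrow> nat" where
  "Lf \<omega> = (LEAST m. \<omega> (int m) \<in> Cst)"
definition Lb :: "(int \<Rightarrow> real^'k::finite^'k) \<Rightarrow> nat" where
  "Lb \<omega> = (LEAST m. \<omega> (-1 - int m) \<in> Cst)"
definition J0 where
  "J0 (\<omega> :: int \<Rightarrow> ((real, 'a) vec, 'a) vec) = Gc \<omega> (- int (Suc (Lb \<omega>))) (Suc (Lb \<omega>)) (e1_idx :: 'a::{finite,wellorder})"

lemma AE_good: "AE \<omega> in (Mu :: (int \<Rightarrow> real^'k::finite^'k) measure). goodf \<omega> \<and> goodb \<omega>"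
  using good_AE AE_space by eventually_elim (auto simp: goodf_def goodb_def space_Mu)

lemma F1: assumes "goodf \<omega>" "Suc (Lf \<omega>) \<le> n" shows "Gc \<omega> 0 n i = Gc \<omega> 0 n j"
proof -
  have "\<omega> (int (Lf \<omega>)) \<in> Cst" unfolding Lf_def by (rule LeastI_ex) (use assms(1) goodf_def in auto)
  then show ?thesis using Gc_const[of \<omega> 0 "Lf \<omega>" n i j] assms(2) by simp
qed

lemma F2: assumes "goodb \<omega>" "Suc (Lb \<omega>) \<le> n" shows "Gc \<omega> (- int n) n i = Gc \<omega> (- int n) n j"
proof -
  have c: "\<omega> (-1 - int (Lb \<omega>)) \<in> Cst" unfolding Lb_def by (rule LeastI_ex) (use assms(1) goodb_def in auto)
  have e: "- int n + int (n - Suc (Lb \<omega>)) = -1 - int (Lb \<omega>)" using assms(2) by simp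
  show ?thesis using Gc_const[of \<omega> "- int n" "n - Suc (Lb \<omega>)" n i j] assms(2) c e by simp
qed

lemma back_val: assumes "goodb \<omega>" "Suc (Lb \<omega>) \<le> n" shows "Gc \<omega> (- int n) n = (\<lambda>_. J0 \<omega>)"
  unfolding J0_def
  by (rule Gc_const_mono_back[OF _ assms(2)]) (use F2[OF assms(1)] in blast)

lemma back_unique: assumes "goodb \<omega>" "Gc \<omega> (- int n) n = (\<lambda>_. i)" shows "i = J0 \<omega>"
proof -
  let ?M = "max n (Suc (Lb \<omega>))"
  have "Gc \<omega> (- int ?M) ?M = (\<lambda>_. Gc \<omega> (- int n) n x)" for x
    by (rule Gc_const_mono_back) (use assms(2) in auto)
  then have "Gc \<omega> (- int ?M) ?M = (\<lambda>_. i)" using assms(2) by simp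
  moreover have "Gc \<omega> (- int ?M) ?M = (\<lambda>_. J0 \<omega>)" by (rule back_val[OF assms(1)]) simp
  ultimately show ?thesis by metis
qed

lemma J0_shift: assumes g: "goodb \<omega>" shows "Gc \<omega> 0 n (J0 \<omega>) = J0 (\<lambda>z. \<omega> (z + int n))"
proof -
  let ?L = "Suc (Lb \<omega>)"
  let ?w = "\<lambda>z. \<omega> (z + int n)"
  have c: "\<omega> (-1 - int (Lb \<omega>)) \<in> Cst" unfolding Lb_def by (rule LeastI_ex) (use g goodb_def in auto)
  have gw: "goodb ?w" unfolding goodb_def
  proof
    show "\<forall>z. ?w z \<in> Mset" using g by (simp add: goodb_def)
    have "?w (-1 - int (Lb \<omega> + n)) = \<omega> (-1 - int (Lb \<omega>))" by simp
    then show "\<exists>m::nat. ?w (-1 - int m) \<in> Cst" using c by metis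
  qed
  have e: "- int (?L + n) + int n = - int ?L" by simp
  have "Gc ?w (- int (?L + n)) (?L + n) = Gc \<omega> (- int ?L) (?L + n)"
    using Gc_shift[of \<omega> "int n" "- int (?L + n)" "?L + n"] unfolding e .
  also have "\<dots> = Gc \<omega> 0 n \<circ> Gc \<omega> (- int ?L) ?L" using Gc_add[of \<omega> "- int ?L" ?L n] by simp
  also have "\<dots> = (\<lambda>_. Gc \<omega> 0 n (J0 \<omega>))" using back_val[OF g, of ?L] by (simp add: o_def)
  finally show ?thesis by (rule back_unique[OF gw])
qed

lemma MM_meas: "f \<in> measurable MM (count_space UNIV)"
  by (simp add: measurable_def sets_uniform_count_measure space_uniform_count_measure)

lemma coord_meas: "(\<lambda>\<omega>. f (\<omega> z)) \<in> measurable (Mu :: (int \<Rightarrow> real^'k::finite^'k) measure) (count_space UNIV)"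
  unfolding Mu_def
  by (rule measurable_compose[where f="\<lambda>\<omega>. \<omega> z" and N=MM, OF measurable_component_singleton MM_meas]) simp

lemma Gc_meas: "(\<lambda>\<omega>. Gc \<omega> a n x) \<in> measurable (Mu :: (int \<Rightarrow> real^'k::finite^'k) measure) (count_space UNIV)"
proof (induction n arbitrary: x)
  case 0 then show ?case by simp
next
  case (Suc n)
  have "(\<lambda>\<omega>. (\<lambda>l \<omega>. fm (\<omega> (a + int n)) l) (Gc \<omega> a n x) \<omega>) \<in> measurable (Mu :: (int \<Rightarrow> real^'k::finite^'k) measure) (count_space UNIV)"
    apply (rule measurable_compose_countable'[where I=UNIV and f="\<lambda>l \<omega>. fm (\<omega> (a + int n)) l" and g="\<lambda>\<omega>. Gc \<omega> a n x"])
      apply (rule coord_meas)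
     apply (rule Suc.IH)
    apply (simp add: countable_finite)
    done
  then show ?case by simp
qed

lemma Lf_meas: "Lf \<in> measurable (Mu :: (int \<Rightarrow> real^'k::finite^'k) measure) (count_space UNIV)"
  unfolding Lf_def[abs_def] by (rule measurable_Least) (rule coord_meas)

lemma Lb_meas: "Lb \<in> measurable (Mu :: (int \<Rightarrow> real^'k::finite^'k) measure) (count_space UNIV)"
  unfolding Lb_def[abs_def] by (rule measurable_Least) (rule coord_meas)

lemma J0_meas: "J0 \<in> measurable (Mu :: (int \<Rightarrow> ((real, 'k::{finite,wellorder}) vec, 'k) vec) measure) (count_space UNIV)"
proof -
  have "(\<lambda>\<omega>. (\<lambda>l \<omega>. Gc \<omega> (- int (Suc l)) (Suc l) e1_idx) (Lb \<omega>) \<omega>) \<in> measurable (Mu :: (int \<Rightarrow> ((real, 'k::{finite,wellorder}) vec, 'k) vec) measure) (count_space UNIV)"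
    apply (rule measurable_compose_countable'[where I=UNIV and f="\<lambda>l \<omega>. Gc \<omega> (- int (Suc l)) (Suc l) e1_idx" and g=Lb])
      apply (rule Gc_meas)
     apply (rule Lb_meas)
    apply simp
    done
  then show ?thesis by (simp add: J0_def[abs_def])
qed

lemma P0_back: "(\<And>z. \<omega> z \<in> Mset) \<Longrightarrow> P0 n ((theta_inv ^^ n) \<omega>) *v axis j 1 = axis (Gc \<omega> (- int n) n j) 1"
  using P0_Gc_shift[of \<omega> n "- int n" j] by (simp add: theta_inv_pow)

lemma rank_fwd: "(\<And>z. \<omega> z \<in> Mset) \<Longrightarrow> rank (P0 n \<omega>) = 1 \<longleftrightarrow> (\<forall>i j. Gc \<omega> 0 n i = Gc \<omega> 0 n j)"
  by (rule rank_iff) (rule P0_Gc)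

lemma rank_back: "(\<And>z. \<omega> z \<in> Mset) \<Longrightarrow> rank (P0 n ((theta_inv ^^ n) \<omega>)) = 1 \<longleftrightarrow> (\<forall>i j. Gc \<omega> (- int n) n i = Gc \<omega> (- int n) n j)"
  by (rule rank_iff) (rule P0_back)



lemma goodf_Mset: "goodf \<omega> \<Longrightarrow> \<omega> z \<in> Mset" by (simp add: goodf_def)
lemma goodb_Mset: "goodb \<omega> \<Longrightarrow> \<omega> z \<in> Mset" by (simp add: goodb_def)

lemma P0_Gc_f: "goodf \<omega> \<Longrightarrow> P0 n \<omega> *v axis j 1 = axis (Gc \<omega> 0 n j) 1"
  by (rule P0_Gc) (simp add: goodf_def)
lemma P0_Gc_b: "goodb \<omega> \<Longrightarrow> P0 n \<omega> *v axis j 1 = axis (Gc \<omega> 0 n j) 1"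
  by (rule P0_Gc) (simp add: goodb_def)
lemma P0_shift_b: "goodb \<omega> \<Longrightarrow> P0 n (\<lambda>z. \<omega> (z + s)) *v axis j 1 = axis (Gc \<omega> s n j) 1"
  by (rule P0_Gc_shift) (simp add: goodb_def)
lemma P0_back_b: "goodb \<omega> \<Longrightarrow> P0 n ((theta_inv ^^ n) \<omega>) *v axis j 1 = axis (Gc \<omega> (- int n) n j) 1"
  by (rule P0_back) (simp add: goodb_def)
lemma rank_fwd_f: "goodf \<omega> \<Longrightarrow> rank (P0 n \<omega>) = 1 \<longleftrightarrow> (\<forall>i j. Gc \<omega> 0 n i = Gc \<omega> 0 n j)"
  by (rule rank_fwd) (simp add: goodf_def)
lemma rank_back_b: "goodb \<omega> \<Longrightarrow> rank (P0 n ((theta_inv ^^ n) \<omega>)) = 1 \<longleftrightarrow> (\<forall>i j. Gc \<omega> (- int n) n i = Gc \<omega> (- int n) n j)"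
  by (rule rank_back) (simp add: goodb_def)

lemma sync_part: "synchronized TYPE('k::finite)"
  unfolding synchronized_def
proof (intro exI conjI)
  show "(\<lambda>\<omega>. Suc (Lf \<omega>)) \<in> (Mu :: (int \<Rightarrow> real^'k^'k) measure) \<rightarrow>\<^sub>M count_space UNIV"
    by (rule measurable_compose[OF Lf_meas]) simp
  show "\<forall>\<omega>\<in>space Mu. 1 \<le> Suc (Lf \<omega>)" by simp
  show "AE \<omega> in (Mu :: (int \<Rightarrow> real^'k^'k) measure). \<forall>n\<ge>Suc (Lf \<omega>). cols_coincide (P0 n \<omega>)"
    using AE_good
  proof eventually_elim
    case (elim \<omega>)
    then have g: "goodf \<omega>" by simp
    show ?case
    proof (intro allI impI)
      fix n assume n: "Suc (Lf \<omega>) \<le> n"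
      show "cols_coincide (P0 n \<omega>)"
        by (subst cols_iff[OF P0_Gc_f[OF g]]) (use F1[OF g n] in blast)
    qed
  qed
qed

lemma J0_sync: "sync_index (J0 :: _ \<Rightarrow> 'k::{finite,wellorder})"
  unfolding sync_index_def
proof (intro conjI)
  show "J0 \<in> (Mu :: (int \<Rightarrow> ((real, 'k) vec, 'k) vec) measure) \<rightarrow>\<^sub>M count_space UNIV" by (rule J0_meas)
  show "AE \<omega> in (Mu :: (int \<Rightarrow> ((real, 'k) vec, 'k) vec) measure). \<forall>n. P0 n \<omega> *v axis (J0 \<omega>) 1 = axis (J0 ((theta ^^ n) \<omega>)) 1"
    using AE_good
  proof eventually_elim
    case (elim \<omega>)
    then have g: "goodb \<omega>" by simp
    show ?case
      by (simp add: P0_Gc_b[OF g] theta_pow J0_shift[OF g])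
  qed
qed

lemma J_unique:
  fixes J :: "(int \<Rightarrow> ((real, 'k::{finite,wellorder}) vec, 'k) vec) \<Rightarrow> 'k"
  assumes "sync_index J" shows "AE \<omega> in Mu. J \<omega> = J0 \<omega>"
proof -
  from assms have Q: "AE \<omega> in Mu. \<forall>n. P0 n \<omega> *v axis (J \<omega>) 1 = axis (J ((theta ^^ n) \<omega>)) 1"
    by (simp add: sync_index_def)
  have "AE \<omega> in Mu. \<forall>m::nat. \<forall>n. P0 n (\<lambda>z. \<omega> (z + - int m)) *v axis (J (\<lambda>z. \<omega> (z + - int m))) 1
      = axis (J ((theta ^^ n) (\<lambda>z. \<omega> (z + - int m)))) 1"
  proof (subst AE_all_countable, intro allI)
    fix m :: nat
    show "AE \<omega> in Mu. \<forall>n. P0 n (\<lambda>z. \<omega> (z + - int m)) *v axis (J (\<lambda>z. \<omega> (z + - int m))) 1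
      = axis (J ((theta ^^ n) (\<lambda>z. \<omega> (z + - int m)))) 1"
      by (rule AE_sh[OF Q])
  qed
  then show ?thesis using AE_good
  proof eventually_elim
    case (elim \<omega>)
    then have g: "goodb \<omega>" by simp
    let ?L = "Suc (Lb \<omega>)"
    from elim(1) have q: "P0 ?L (\<lambda>z. \<omega> (z + - int ?L)) *v axis (J (\<lambda>z. \<omega> (z + - int ?L))) 1
       = axis (J ((theta ^^ ?L) (\<lambda>z. \<omega> (z + - int ?L)))) 1" by blast
    have t: "(theta ^^ ?L) (\<lambda>z. \<omega> (z + - int ?L)) = \<omega>" by (subst theta_pow) simp
    have p: "P0 ?L (\<lambda>z. \<omega> (z + - int ?L)) *v axis j 1 = axis (Gc \<omega> (- int ?L) ?L j) 1" for j
      by (rule P0_shift_b[OF g])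
    have b: "Gc \<omega> (- int ?L) ?L = (\<lambda>_. J0 \<omega>)" by (rule back_val[OF g]) simp
    from q show ?case unfolding t p b by simp
  qed
qed

lemma lim_part:
  fixes J :: "(int \<Rightarrow> ((real, 'k::{finite,wellorder}) vec, 'k) vec) \<Rightarrow> 'k"
  assumes "sync_index J"
  shows "AE \<omega> in Mu. (\<lambda>n. P0 n ((theta_inv ^^ n) \<omega>) *v axis e1_idx 1) \<longlonglongrightarrow> axis (J \<omega>) 1"
  using J_unique[OF assms] AE_good
proof eventually_elim
  case (elim \<omega>)
  then have g: "goodb \<omega>" and J: "J \<omega> = J0 \<omega>" by simp_all
  show ?case
  proof (rule tendsto_eventually, rule eventually_sequentiallyI)
    fix n assume n: "Suc (Lb \<omega>) \<le> n"
    show "P0 n ((theta_inv ^^ n) \<omega>) *v axis e1_idx 1 = axis (J \<omega>) 1"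
      by (simp add: P0_back_b[OF g] back_val[OF g n] J)
  qed
qed

lemma N0p: assumes g: "goodf \<omega>"
  shows "N0_plus \<omega> = (LEAST n. 1 \<le> n \<and> rank (P0 n \<omega>) = 1) \<and> (\<exists>n. 1 \<le> n \<and> rank (P0 n \<omega>) = 1)"
proof -
  have ev: "rank (P0 n \<omega>) = 1" if "Suc (Lf \<omega>) \<le> n" for n
    using rank_fwd_f[OF g] F1[OF g that] by blast
  have "(\<lambda>n. rank (P0 n \<omega>)) \<longlonglongrightarrow> 1"
    by (rule tendsto_eventually, rule eventually_sequentiallyI[of "Suc (Lf \<omega>)"]) (rule ev)
  moreover have "1 \<le> Suc (Lf \<omega>) \<and> rank (P0 (Suc (Lf \<omega>)) \<omega>) = 1" using ev[of "Suc (Lf \<omega>)"] by (simp del: P0.simps)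
  ultimately show ?thesis unfolding N0_plus_def by (auto simp del: P0.simps)
qed

lemma N0m: assumes g: "goodb \<omega>"
  shows "N0_minus \<omega> = (LEAST n. 1 \<le> n \<and> rank (P0 n ((theta_inv ^^ n) \<omega>)) = 1) \<and> (\<exists>n. 1 \<le> n \<and> rank (P0 n ((theta_inv ^^ n) \<omega>)) = 1)"
proof -
  have ev: "rank (P0 n ((theta_inv ^^ n) \<omega>)) = 1" if "Suc (Lb \<omega>) \<le> n" for n
    using rank_back_b[OF g] F2[OF g that] by blast
  have "(\<lambda>n. rank (P0 n ((theta_inv ^^ n) \<omega>))) \<longlonglongrightarrow> 1"
    by (rule tendsto_eventually, rule eventually_sequentiallyI[of "Suc (Lb \<omega>)"]) (rule ev)
  moreover have "1 \<le> Suc (Lb \<omega>) \<and> rank (P0 (Suc (Lb \<omega>)) ((theta_inv ^^ (Suc (Lb \<omega>))) \<omega>)) = 1" using ev[of "Suc (Lb \<omega>)"] by (simp del: P0.simps funpow.simps)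
  ultimately show ?thesis unfolding N0_minus_def by (auto simp del: P0.simps funpow.simps)
qed



lemma fwd_part:
  fixes J :: "(int \<Rightarrow> ((real, 'k::{finite,wellorder}) vec, 'k) vec) \<Rightarrow> 'k"
    and N :: "(int \<Rightarrow> ((real, 'k) vec, 'k) vec) \<Rightarrow> nat"
  assumes J: "sync_index J" and Nm: "N \<in> Mu \<rightarrow>\<^sub>M count_space UNIV" and N1: "\<forall>\<omega>\<in>space Mu. 1 \<le> N \<omega>"
  shows "fwd_sync_time J N \<longleftrightarrow> (AE \<omega> in Mu. N0_plus \<omega> \<le> N \<omega>)"
proof
  assume "fwd_sync_time J N"
  then have A: "AE \<omega> in Mu. \<forall>j. \<forall>n\<ge>N \<omega>. P0 n \<omega> *v axis j 1 = axis (J ((theta ^^ n) \<omega>)) 1"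
    by (simp add: fwd_sync_time_def)
  show "AE \<omega> in Mu. N0_plus \<omega> \<le> N \<omega>"
    using A AE_good
  proof eventually_elim
    case (elim \<omega>)
    then have g: "goodf \<omega>" by simp
    have sp: "\<omega> \<in> space Mu" using g by (simp add: goodf_def space_Mu)
    have n1: "1 \<le> N \<omega>" using N1 sp by blast
    have "\<forall>i j. Gc \<omega> 0 (N \<omega>) i = Gc \<omega> 0 (N \<omega>) j"
      using elim(1) by (simp add: P0_Gc_f[OF g] del: P0.simps)
    then have "rank (P0 (N \<omega>) \<omega>) = 1" using rank_fwd_f[OF g] by blast
    then show ?case using N0p[OF g] n1 by (simp del: P0.simps) (rule Least_le, simp)
  qed
next
  assume A: "AE \<omega> in Mu. N0_plus \<omega> \<le> N \<omega>"
  from J have Q: "AE \<omega> in Mu. \<forall>n. P0 n \<omega> *v axis (J \<omega>) 1 = axis (J ((theta ^^ n) \<omega>)) 1"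
    by (simp add: sync_index_def)
  have "AE \<omega> in Mu. \<forall>j. \<forall>n\<ge>N \<omega>. P0 n \<omega> *v axis j 1 = axis (J ((theta ^^ n) \<omega>)) 1"
    using A Q AE_good
  proof eventually_elim
    case (elim \<omega>)
    then have g: "goodf \<omega>" by simp
    let ?L = "N0_plus \<omega>"
    have L: "1 \<le> ?L \<and> rank (P0 ?L \<omega>) = 1"
      using N0p[OF g] by (metis (mono_tags, lifting) LeastI_ex)
    then have cL: "\<forall>i j. Gc \<omega> 0 ?L i = Gc \<omega> 0 ?L j" using rank_fwd_f[OF g] by blast
    show ?case
    proof (intro allI impI)
      fix j n assume n: "N \<omega> \<le> n"
      then have "?L \<le> n" using elim(1) by simp
      then have c: "Gc \<omega> 0 n j = Gc \<omega> 0 n (J \<omega>)" by (rule Gc_const_mono[OF cL])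
      have "P0 n \<omega> *v axis j 1 = P0 n \<omega> *v axis (J \<omega>) 1"
        by (simp add: P0_Gc_f[OF g] c del: P0.simps)
      also have "\<dots> = axis (J ((theta ^^ n) \<omega>)) 1" using elim(2) by blast
      finally show "P0 n \<omega> *v axis j 1 = axis (J ((theta ^^ n) \<omega>)) 1" .
    qed
  qed
  then show "fwd_sync_time J N" unfolding fwd_sync_time_def using Nm N1 by blast
qed

lemma pb_part:
  fixes J :: "(int \<Rightarrow> ((real, 'k::{finite,wellorder}) vec, 'k) vec) \<Rightarrow> 'k"
    and N :: "(int \<Rightarrow> ((real, 'k) vec, 'k) vec) \<Rightarrow> nat"
  assumes J: "sync_index J" and Nm: "N \<in> Mu \<rightarrow>\<^sub>M count_space UNIV" and N1: "\<forall>\<omega>\<in>space Mu. 1 \<le> N \<omega>"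
  shows "pb_sync_time J N \<longleftrightarrow> (AE \<omega> in Mu. N0_minus \<omega> \<le> N \<omega>)"
proof
  assume "pb_sync_time J N"
  then have A: "AE \<omega> in Mu. \<forall>j. \<forall>n\<ge>N \<omega>. P0 n ((theta_inv ^^ n) \<omega>) *v axis j 1 = axis (J \<omega>) 1"
    by (simp add: pb_sync_time_def)
  show "AE \<omega> in Mu. N0_minus \<omega> \<le> N \<omega>"
    using A AE_good
  proof eventually_elim
    case (elim \<omega>)
    then have g: "goodb \<omega>" by simp
    have sp: "\<omega> \<in> space Mu" using g by (simp add: goodb_def space_Mu)
    have n1: "1 \<le> N \<omega>" using N1 sp by blast
    have "\<forall>i j. Gc \<omega> (- int (N \<omega>)) (N \<omega>) i = Gc \<omega> (- int (N \<omega>)) (N \<omega>) j"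
      using elim(1) by (simp add: P0_back_b[OF g] del: P0.simps funpow.simps)
    then have "rank (P0 (N \<omega>) ((theta_inv ^^ (N \<omega>)) \<omega>)) = 1" using rank_back_b[OF g] by blast
    then show ?case using N0m[OF g] n1 by (simp del: P0.simps funpow.simps) (rule Least_le, simp)
  qed
next
  assume A: "AE \<omega> in Mu. N0_minus \<omega> \<le> N \<omega>"
  have "AE \<omega> in Mu. \<forall>j. \<forall>n\<ge>N \<omega>. P0 n ((theta_inv ^^ n) \<omega>) *v axis j 1 = axis (J \<omega>) 1"
    using A J_unique[OF J] AE_good
  proof eventually_elim
    case (elim \<omega>)
    then have g: "goodb \<omega>" by simp
    let ?L = "N0_minus \<omega>"
    have L: "1 \<le> ?L \<and> rank (P0 ?L ((theta_inv ^^ ?L) \<omega>)) = 1"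
      using N0m[OF g] by (metis (mono_tags, lifting) LeastI_ex)
    then have cL: "\<forall>i j. Gc \<omega> (- int ?L) ?L i = Gc \<omega> (- int ?L) ?L j" using rank_back_b[OF g] by blast
    show ?case
    proof (intro allI impI)
      fix j n assume n: "N \<omega> \<le> n"
      then have "?L \<le> n" using elim(1) by simp
      then have c: "Gc \<omega> (- int n) n = (\<lambda>_. Gc \<omega> (- int ?L) ?L j)" by (rule Gc_const_mono_back[OF cL])
      then have "Gc \<omega> (- int ?L) ?L j = J0 \<omega>" by (rule back_unique[OF g])
      then have "Gc \<omega> (- int n) n j = J \<omega>" using c elim(2) by simp
      then show "P0 n ((theta_inv ^^ n) \<omega>) *v axis j 1 = axis (J \<omega>) 1"
        by (simp add: P0_back_b[OF g] del: P0.simps funpow.simps)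
    qed
  qed
  then show "pb_sync_time J N" unfolding pb_sync_time_def using Nm N1 by blast
qed

lemma Gc_id: "(\<And>m. m < n \<Longrightarrow> \<omega> (a + int m) = mat 1) \<Longrightarrow> Gc \<omega> a n = id"
  by (induction n) (auto simp: mat1_mk)

lemma nonunif:
  assumes "CARD('k::finite) \<ge> 2"
  shows "\<not> unif_synchronized TYPE('k)"
proof
  assume "unif_synchronized TYPE('k)"
  then obtain N :: "(int \<Rightarrow> real^'k^'k) \<Rightarrow> nat" and c where
    Nc: "AE \<omega> in Mu. N \<omega> = c" and S: "AE \<omega> in Mu. \<forall>n\<ge>N \<omega>. cols_coincide (P0 n \<omega>)"
    unfolding unif_synchronized_def by blast
  have "AE \<omega> in (Mu :: (int \<Rightarrow> real^'k^'k) measure). cols_coincide (P0 c \<omega>)" using Nc S by eventually_elim auto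
  then obtain N0 where N0: "{\<omega> \<in> space (Mu :: (int \<Rightarrow> real^'k^'k) measure). \<not> cols_coincide (P0 c \<omega>)} \<subseteq> N0" "emeasure Mu N0 = 0" "N0 \<in> sets Mu"
    by (rule AE_E)
  obtain a b :: 'k where ab: "a \<noteq> b"
  proof -
    have "\<exists>a b :: 'k. a \<noteq> b"
    proof (rule ccontr)
      assume "\<not> (\<exists>a b :: 'k. a \<noteq> b)"
      then have "CARD('k) \<le> Suc 0" by (subst card_le_Suc0_iff_eq) auto
      then show False using assms by simp
    qed
    then show ?thesis using that by blast
  qed
  let ?C = "{\<omega>\<in>space (Mu :: (int \<Rightarrow> real^'k^'k) measure). \<forall>z\<in>{0..<int c}. \<omega> z \<in> {mat 1}}"
  have m1: "(mat 1 :: real^'k^'k) \<in> Mset" by (simp add: mat1_mk mk_in)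
  have Cs: "?C \<in> sets Mu" by (rule cyl_sets) (use m1 in auto)
  have "emeasure Mu ?C = ennreal (\<Prod>z\<in>{0..<int c}. real (card {mat 1 :: real^'k^'k}) / real (card (Mset :: (real^'k^'k) set)))"
    by (rule cyl_meas) (use m1 in auto)
  also have "\<dots> > 0"
  proof -
    have "card (Mset :: (real^'k^'k) set) > 0" using finite_Mset Mset_ne by (simp add: card_gt_0_iff)
    then have "(\<Prod>z\<in>{0..<int c}. real (card {mat 1 :: real^'k^'k}) / real (card (Mset :: (real^'k^'k) set))) > 0"
      by (intro prod_pos) simp
    then show ?thesis by simp
  qed
  finally have pos: "emeasure Mu ?C > 0" .
  have "?C \<subseteq> {\<omega> \<in> space Mu. \<not> cols_coincide (P0 c \<omega>)}"
  proof safe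
    fix \<omega> :: "int \<Rightarrow> real^'k^'k" assume w: "\<omega> \<in> space Mu" "\<forall>z\<in>{0..<int c}. \<omega> z \<in> {mat 1}" "cols_coincide (P0 c \<omega>)"
    have ms: "\<And>z. \<omega> z \<in> Mset" using w(1) by (simp add: space_Mu)
    have gid: "Gc \<omega> 0 c = id" by (rule Gc_id) (use w(2) in auto)
    have pg: "\<And>j. P0 c \<omega> *v axis j 1 = axis (Gc \<omega> 0 c j) 1" by (rule P0_Gc) (rule ms)
    have "\<forall>i j. Gc \<omega> 0 c i = Gc \<omega> 0 c j" using w(3) cols_iff[OF pg] by blast
    then have "a = b" using gid [[show_types]] by (metis id_apply)
    then show False using ab by blast
  qed
  then have "emeasure Mu ?C \<le> emeasure Mu N0" using N0 by (intro emeasure_mono) auto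
  then show False using pos N0(2) by simp
qed


theorem proposition6p1:
  assumes "CARD('k::{finite,wellorder}) \<ge> 2"
  shows "synchronized TYPE('k::{finite,wellorder})
    \<and> (\<exists>J :: (int \<Rightarrow> real^'k::{finite,wellorder}^'k::{finite,wellorder}) \<Rightarrow> 'k::{finite,wellorder}. sync_index J)
    \<and> (\<forall>J :: (int \<Rightarrow> real^'k::{finite,wellorder}^'k::{finite,wellorder}) \<Rightarrow> 'k::{finite,wellorder}. sync_index J \<longrightarrow>
         (AE \<omega> in Mu. (\<lambda>n. P0 n ((theta_inv ^^ n) \<omega>) *v axis e1_idx 1) \<longlonglongrightarrow> axis (J \<omega>) 1)
       \<and> (\<forall>N :: (int \<Rightarrow> real^'k::{finite,wellorder}^'k::{finite,wellorder}) \<Rightarrow> nat.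
            N \<in> Mu \<rightarrow>\<^sub>M count_space UNIV \<longrightarrow> (\<forall>\<omega>\<in>space Mu. 1 \<le> N \<omega>) \<longrightarrow>
            (fwd_sync_time J N \<longleftrightarrow> (AE \<omega> in Mu. N0_plus \<omega> \<le> N \<omega>))
          \<and> (pb_sync_time J N \<longleftrightarrow> (AE \<omega> in Mu. N0_minus \<omega> \<le> N \<omega>))))
    \<and> \<not> unif_synchronized TYPE('k::{finite,wellorder})"
  apply (intro conjI)
     apply (rule sync_part)
    apply (rule exI, rule J0_sync)
   apply (intro allI impI conjI)
     apply (erule lim_part)
    apply (erule fwd_part; assumption)
   apply (erule pb_part; assumption)
  apply (rule nonunif[OF assms])
  done

end
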